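(* Let $\sigma=(\sigma_n)$ be a sequence of positive integers for which there exists $c>1$ such that $\sigma_{n+1}\ge c\,\sigma_n$ for all sufficiently large $n$. Then a nonnegative random variable $W$ is $\sigma$-summable if and only if $\sum_n F_W^{-1}(1/\sigma_n)<\infty$.
   Context: With $(W_n^j)_{n,j}$ independent copies of $W$ and $\Lambda_n=\min_{1\le j\le\sigma_n}W_n^j$, $W$ is called $\sigma$-summable if $\Pr\{\sum_n\Lambda_n<\infty\}>0$. $F_W$ is the distribution function of $W$ and $F_W^{-1}(u)=\inf\{x:F_W(x)\ge u\}$. *)

theory Defs
  imports "HOL-Probability.Probability"
begin

definition distrib_fun :: "'a measure \<Rightarrow> ('a \<Rightarrow> real) \<Rightarrow> real \<Rightarrow> real" where
  "distrib_fun M W = cdf (distr M borel W)"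

definition quantile :: "'a measure \<Rightarrow> ('a \<Rightarrow> real) \<Rightarrow> real \<Rightarrow> real" where
  "quantile M W u = Inf {x. distrib_fun M W x \<ge> u}"

text \<open>sigma-summability: on the product space carrying independent copies
  W_n^j (indexed by (n,j), j < sigma n) of W, the event that
  sum_n min_{j < sigma n} W_n^j is finite has positive probability.\<close>
definition sigma_summable :: "(nat \<Rightarrow> nat) \<Rightarrow> 'a measure \<Rightarrow> ('a \<Rightarrow> real) \<Rightarrow> bool" where
  "sigma_summable \<sigma> M W \<longleftrightarrow>
     (let P = PiM (UNIV :: (nat \<times> nat) set) (\<lambda>_. distr M borel W) in
      measure P {\<omega> \<in> space P. summable (\<lambda>n. Min ((\<lambda>j. \<omega> (n, j)) ` {..<\<sigma> n}))} > 0)"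

end

theory Submission
  imports Defs
begin


lemma pow_bound:
  fixes s :: real and t :: nat
  assumes "1 \<le> s" "0 < t"
  shows "(1 - 1/s)^t \<le> s / t"
proof -
  have "1 - 1/s \<le> exp (-(1/s))" using exp_ge_add_one_self[of "-(1/s)"] by simp
  moreover have "0 \<le> 1 - 1/s" using assms by (simp add: field_simps)
  ultimately have "(1 - 1/s)^t \<le> exp (-(1/s))^t" by (rule power_mono)
  also have "\<dots> = exp (-(t/s))" by (simp add: exp_of_nat_mult[symmetric] field_simps)
  also have "\<dots> = 1 / exp (t/s)" by (simp add: exp_minus field_simps)
  also have "\<dots> \<le> 1 / (t/s)"
  proof -
    have "t/s \<le> exp (t/s)" using exp_ge_add_one_self[of "t/s"] by linarith
    moreover have "0 < t/s" using assms by auto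
    ultimately show ?thesis by (intro divide_left_mono) (simp_all, metis exp_gt_zero mult_pos_pos times_divide_eq_right)
  qed
  finally show ?thesis by simp
qed

lemma summable_div2:
  fixes f :: "nat \<Rightarrow> real"
  assumes "summable f"
  shows "summable (\<lambda>n. f (n div 2))"
proof -
  define h1 where "h1 n = (if even n then f (n div 2) else 0)" for n
  define h2 where "h2 n = (if odd n then f (n div 2) else 0)" for n
  have "summable (\<lambda>n. h1 (2*n))" using assms by (simp add: h1_def)
  moreover have "strict_mono (\<lambda>n::nat. 2*n)" by (auto simp: strict_mono_def)
  moreover have "\<And>n. n \<notin> range (\<lambda>n::nat. 2*n) \<Longrightarrow> h1 n = 0"
    by (auto simp: h1_def elim!: evenE)
  ultimately have s1: "summable h1" using summable_mono_reindex by blast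
  have "summable (\<lambda>n. h2 (2*n+1))" using assms by (simp add: h2_def)
  moreover have "strict_mono (\<lambda>n::nat. 2*n+1)" by (auto simp: strict_mono_def)
  moreover have "\<And>n. n \<notin> range (\<lambda>n::nat. 2*n+1) \<Longrightarrow> h2 n = 0"
    by (auto simp: h2_def elim!: oddE)
  ultimately have s2: "summable h2" using summable_mono_reindex by blast
  have "(\<lambda>n. f (n div 2)) = (\<lambda>n. h1 n + h2 n)" by (auto simp: h1_def h2_def)
  then show ?thesis using summable_add[OF s1 s2] by simp
qed



locale nonneg_dist = real_distribution M for M +
  assumes neg0: "measure M {..<0} = 0"
begin

definition Q :: "real \<Rightarrow> real" where "Q u = Inf {x. cdf M x \<ge> u}"

lemma cdf_neg: "x < 0 \<Longrightarrow> cdf M x = 0"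
proof -
  assume "x < 0"
  then have "cdf M x \<le> measure M {..<0}" unfolding cdf_def
    by (intro finite_measure_mono) auto
  then show ?thesis using neg0 cdf_nonneg[of x] by simp
qed

lemma Q_set:
  assumes "0 < u" "u < 1"
  shows "{x. cdf M x \<ge> u} \<noteq> {}" "bdd_below {x. cdf M x \<ge> u}"
    "\<And>x. x \<in> {x. cdf M x \<ge> u} \<Longrightarrow> 0 \<le> x"
proof -
  have "\<forall>\<^sub>F x in at_top. cdf M x > u"
    using cdf_lim_at_top_prob assms(2) by (rule order_tendstoD)
  then obtain x where "cdf M x > u" by (metis eventually_at_top_linorder order_refl)
  then show "{x. cdf M x \<ge> u} \<noteq> {}" using less_imp_le by blast
  show nn: "\<And>x. x \<in> {x. cdf M x \<ge> u} \<Longrightarrow> 0 \<le> x"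
    using cdf_neg assms by (metis linorder_not_less mem_Collect_eq)
  show "bdd_below {x. cdf M x \<ge> u}" using nn by (rule bdd_belowI)
qed

lemma Q_nonneg: "0 < u \<Longrightarrow> u < 1 \<Longrightarrow> 0 \<le> Q u"
  unfolding Q_def using Q_set by (intro cInf_greatest) auto

lemma Q_less: "0 < u \<Longrightarrow> u < 1 \<Longrightarrow> x < Q u \<Longrightarrow> cdf M x < u"
  unfolding Q_def using Q_set by (metis cInf_lower linorder_not_le mem_Collect_eq)

lemma Q_ge: assumes "0 < u" "u < 1" shows "u \<le> cdf M (Q u)"
proof -
  have lim: "(cdf M \<longlongrightarrow> cdf M (Q u)) (at_right (Q u))"
    using cdf_is_right_cont by (simp add: continuous_within)
  have "\<forall>\<^sub>F y in at_right (Q u). u \<le> cdf M y"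
  proof -
    have "u \<le> cdf M y" if "Q u < y" for y
    proof -
      have "Inf {x. cdf M x \<ge> u} < y" using that unfolding Q_def .
      then obtain s where "s \<in> {x. cdf M x \<ge> u}" "s < y"
        using cInf_lessD[OF Q_set(1)[OF assms]] by (auto simp del: mem_Collect_eq)
      then show ?thesis using cdf_nondecreasing[of s y] by auto
    qed
    then show ?thesis using eventually_at_right_less[of "Q u"] by (rule eventually_mono[rotated]) auto
  qed
  then show ?thesis using lim by (intro tendsto_lowerbound) auto
qed

lemma Q_mono: "0 < u \<Longrightarrow> u \<le> v \<Longrightarrow> v < 1 \<Longrightarrow> Q u \<le> Q v"
  unfolding Q_def using Q_set[of u] Q_set[of v]
  by (intro cInf_superset_mono) auto

end



context real_distribution begin

lemma PiM_space: "space (PiM (UNIV::'i set) (\<lambda>_. M)) = UNIV"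
  by (simp add: space_PiM PiE_def extensional_def)

lemma PiM_prob: "prob_space (PiM (UNIV::'i set) (\<lambda>_. M))"
  by (intro prob_space_PiM) (simp add: prob_space_axioms)

lemma PiM_rect:
  fixes J :: "'i set"
  assumes "finite J" "\<And>i. i \<in> J \<Longrightarrow> A i \<in> sets borel"
  shows "{\<omega>. \<forall>i\<in>J. \<omega> i \<in> A i} \<in> sets (PiM UNIV (\<lambda>_. M))"
    "measure (PiM UNIV (\<lambda>_. M)) {\<omega>. \<forall>i\<in>J. \<omega> i \<in> A i} = (\<Prod>i\<in>J. measure M (A i))"
proof -
  have eq: "{\<omega>. \<forall>i\<in>J. \<omega> i \<in> A i} = prod_emb UNIV (\<lambda>_. M) J (Pi\<^sub>E J A)"
    by (auto simp: prod_emb_def PiE_def extensional_def Pi_iff)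
  show "{\<omega>. \<forall>i\<in>J. \<omega> i \<in> A i} \<in> sets (PiM UNIV (\<lambda>_. M))"
    unfolding eq using assms by (intro sets_PiM_I) auto
  have "emeasure (PiM UNIV (\<lambda>_. M)) {\<omega>. \<forall>i\<in>J. \<omega> i \<in> A i} = (\<Prod>i\<in>J. emeasure M (A i))"
    unfolding eq using assms by (intro emeasure_PiM_emb) (auto simp: prob_space_axioms)
  also have "\<dots> = ennreal (\<Prod>i\<in>J. measure M (A i))"
    by (simp add: emeasure_eq_measure prod_ennreal)
  finally show "measure (PiM UNIV (\<lambda>_. M)) {\<omega>. \<forall>i\<in>J. \<omega> i \<in> A i} = (\<Prod>i\<in>J. measure M (A i))"
    by (simp add: measure_def prod_nonneg)
qed

end

theorem corollary4p3:
  fixes M :: "'a measure" and W :: "'a \<Rightarrow> real" and \<sigma> :: "nat \<Rightarrow> nat"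
  assumes "prob_space M"
    and "W \<in> borel_measurable M"
    and "\<And>\<omega>. \<omega> \<in> space M \<Longrightarrow> W \<omega> \<ge> 0"
    and "\<And>n. \<sigma> n > 0"
    and "\<exists>c::real > 1. \<forall>\<^sub>F n in sequentially. real (\<sigma> (Suc n)) \<ge> c * real (\<sigma> n)"
  shows "sigma_summable \<sigma> M W \<longleftrightarrow> summable (\<lambda>n. quantile M W (1 / real (\<sigma> n)))"
proof -
  interpret PM: prob_space M by fact
  define \<mu> where "\<mu> = distr M borel W"
  have rd: "real_distribution \<mu>"
    unfolding \<mu>_def real_distribution_def real_distribution_axioms_def
    using assms(2) by (auto intro!: PM.prob_space_distr)
  interpret \<mu>: real_distribution \<mu> by (rule rd)
  have "measure \<mu> {..<0} = 0"
  proof -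
    have "W -` {..<0} \<inter> space M = {}" using assms(3) by force
    then show ?thesis unfolding \<mu>_def using assms(2) by (simp add: measure_distr)
  qed
  interpret nd: nonneg_dist \<mu> by unfold_locales fact
  have qeq: "quantile M W u = nd.Q u" for u
    unfolding quantile_def distrib_fun_def nd.Q_def \<mu>_def[symmetric] ..
  define P where "P = PiM (UNIV :: (nat \<times> nat) set) (\<lambda>_. \<mu>)"
  interpret P: prob_space P unfolding P_def by (rule \<mu>.PiM_prob)
  have spP: "space P = UNIV" unfolding P_def by (rule \<mu>.PiM_space)
  define \<Lambda> where "\<Lambda> \<omega> n = Min ((\<lambda>j. \<omega> (n, j)) ` {..<\<sigma> n})" for \<omega> :: "nat \<times> nat \<Rightarrow> real" and n
  define A where "A = {\<omega> \<in> space P. summable (\<lambda>n. \<Lambda> \<omega> n)}"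
  have ss: "sigma_summable \<sigma> M W \<longleftrightarrow> measure P A > 0"
    unfolding sigma_summable_def Let_def A_def P_def \<Lambda>_def \<mu>_def ..
  have Ameas: "A \<in> sets P"
  proof -
    have "A = {\<omega> \<in> space P. Cauchy (\<lambda>m. \<Sum>n<m. \<Lambda> \<omega> n)}"
      unfolding A_def summable_iff_convergent Cauchy_convergent_iff ..
    also have "\<dots> \<in> sets P"
      unfolding \<Lambda>_def P_def by measurable
    finally show ?thesis .
  qed
  from assms(5) obtain c :: real and N where c: "c > 1" and cN: "\<And>n. n \<ge> N \<Longrightarrow> c * \<sigma> n \<le> \<sigma> (Suc n)"
    by (auto simp: eventually_sequentially)
  have grow: "c ^ k * \<sigma> m \<le> \<sigma> (m + k)" if "N \<le> m" for m k
  proof (induction k)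
    case (Suc k)
    have "c ^ Suc k * \<sigma> m = c * (c ^ k * \<sigma> m)" by simp
    also have "\<dots> \<le> c * \<sigma> (m + k)" using Suc c by (intro mult_left_mono) auto
    also have "\<dots> \<le> \<sigma> (Suc (m + k))" using cN that by auto
    finally show ?case by simp
  qed simp
  have smono: "real (\<sigma> m) \<le> \<sigma> n" if "N \<le> m" "m \<le> n" for m n
  proof -
    have "1 * real (\<sigma> m) \<le> c ^ (n - m) * \<sigma> m"
      using c by (intro mult_right_mono) auto
    also have "\<dots> \<le> \<sigma> n" using grow[OF that(1), of "n - m"] that by simp
    finally show ?thesis by simp
  qed
  have sig2: "real (\<sigma> n) > 1" if "N < n" for n
  proof -
    have "1 * real (\<sigma> N) < c ^ (n - N) * \<sigma> N"
      using c assms(4)[of N] that by (intro mult_strict_right_mono) auto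
    also have "\<dots> \<le> \<sigma> n" using grow[of N "n - N"] that by simp
    finally show ?thesis using assms(4)[of N] by linarith
  qed
  define u where "u n = 1 / real (\<sigma> n)" for n
  have u0: "0 < u n" for n using assms(4) by (simp add: u_def)
  have u1: "u n < 1" if "N < n" for n using sig2[OF that] by (simp add: u_def)
  have umono: "u n \<le> u m" if "N \<le> m" "m \<le> n" for m n
    using smono[OF that] assms(4)[of m] by (simp add: u_def frac_le)
  have goal: "measure P A > 0 \<longleftrightarrow> summable (\<lambda>n. nd.Q (u n))"
  proof
    show "summable (\<lambda>n. nd.Q (u n))" if pos: "measure P A > 0"
    proof (rule ccontr)
      assume ns: "\<not> summable (\<lambda>n. nd.Q (u n))"
      have Qpos: "nd.Q (u n) > 0" if "N < n" for n
      proof (rule ccontr)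
        assume "\<not> nd.Q (u n) > 0"
        then have z: "nd.Q (u n) \<le> 0" by simp
        have "\<forall>\<^sub>F k in sequentially. norm (nd.Q (u k)) \<le> 0"
          unfolding eventually_sequentially
        proof (intro exI allI impI)
          fix k assume "n \<le> k"
          have "nd.Q (u k) \<le> nd.Q (u n)"
            using \<open>n \<le> k\<close> that u0 u1 umono[of n k] by (intro nd.Q_mono) auto
          moreover have "0 \<le> nd.Q (u k)" using u0 u1[of k] that \<open>n \<le> k\<close> by (intro nd.Q_nonneg) auto
          ultimately show "norm (nd.Q (u k)) \<le> 0" using z by simp
        qed
        then have "summable (\<lambda>n. nd.Q (u n))"
          by (rule summable_comparison_test_ev) simp
        with ns show False by simp
      qed
      define b where "b n = nd.Q (u (2 * n)) / 2" for n
      define D where "D n = {\<omega>. \<forall>i\<in>{n} \<times> {..<\<sigma> n}. \<omega> i \<in> {b n<..}}" for n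
      have Dm: "D n \<in> sets P" for n
        unfolding D_def P_def by (rule \<mu>.PiM_rect) auto
      have Dmeas: "measure P (D n) = (1 - cdf \<mu> (b n)) ^ \<sigma> n" for n
      proof -
        have "measure P (D n) = (\<Prod>i\<in>{n} \<times> {..<\<sigma> n}. measure \<mu> {b n<..})"
          unfolding D_def P_def by (rule \<mu>.PiM_rect) auto
        also have "\<dots> = measure \<mu> {b n<..} ^ \<sigma> n" by (simp add: card_cartesian_product)
        also have "measure \<mu> {b n<..} = 1 - cdf \<mu> (b n)"
        proof -
          have "{b n<..} = space \<mu> - {..b n}" by auto
          then show ?thesis using \<mu>.prob_compl[of "{..a n}"] \<mu>.prob_compl[of "{..b n}"] by (simp add: cdf_def)
        qed
        finally show ?thesis .
      qed
      define E where "E n = space P - D n" for n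
      have Em: "E n \<in> sets P" for n unfolding E_def using Dm by auto
      have Ebound: "measure P (E n) \<le> (1 / c) ^ n" if "N < n" for n
      proof -
        have "measure P (E n) = 1 - (1 - cdf \<mu> (b n)) ^ \<sigma> n"
          unfolding E_def using Dm by (simp add: P.prob_compl Dmeas)
        also have "\<dots> \<le> \<sigma> n * cdf \<mu> (b n)"
          using Bernoulli_inequality[of "- cdf \<mu> (b n)" "\<sigma> n"] \<mu>.cdf_bounded_prob[of "b n"] by simp
        also have "\<dots> \<le> \<sigma> n * u (2 * n)"
        proof -
          have "b n < nd.Q (u (2 * n))" using Qpos[of "2 * n"] that by (simp add: b_def)
          then have "cdf \<mu> (b n) < u (2 * n)" using u0 u1[of "2*n"] that by (intro nd.Q_less) auto
          then show ?thesis by (intro mult_left_mono) auto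
        qed
        also have "\<dots> = \<sigma> n / \<sigma> (n + n)" by (simp add: u_def mult_2)
        also have "\<dots> \<le> 1 / c ^ n"
        proof -
          have "c ^ n * \<sigma> n \<le> \<sigma> (n + n)" using grow[of n n] that by simp
          moreover have "0 < real (\<sigma> n)" "0 < c ^ n" "0 < real (\<sigma> (n + n))" using assms(4) c by auto
          ultimately show ?thesis by (simp add: field_simps)
        qed
        finally show ?thesis by (simp add: power_divide)
      qed
      have "summable (\<lambda>n. measure P (E n))"
      proof (rule summable_comparison_test_ev)
        show "\<forall>\<^sub>F n in sequentially. norm (measure P (E n)) \<le> (1 / c) ^ n"
          using eventually_gt_at_top[of N] by (rule eventually_mono) (use Ebound in simp)
        show "summable (\<lambda>n. (1 / c) ^ n)" using c by (intro summable_geometric) auto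
      qed
      then have BC: "AE \<omega> in P. eventually (\<lambda>n. \<omega> \<in> space P - E n) sequentially"
        using Em by (intro borel_cantelli_AE1) (auto simp: P.emeasure_eq_measure)
      have "AE \<omega> in P. \<omega> \<notin> A"
        using BC
      proof (rule eventually_mono)
        fix \<omega> assume ev: "eventually (\<lambda>n. \<omega> \<in> space P - E n) sequentially"
        show "\<omega> \<notin> A"
        proof
          assume "\<omega> \<in> A"
          then have sl: "summable (\<Lambda> \<omega>)" by (simp add: A_def)
          have "\<forall>\<^sub>F n in sequentially. norm (b n) \<le> \<Lambda> \<omega> n"
            using ev eventually_gt_at_top[of N]
          proof eventually_elim
            case (elim n)
            then have "\<omega> \<in> D n" unfolding E_def using spP by auto
            then have "\<forall>j<\<sigma> n. b n < \<omega> (n, j)" by (auto simp: D_def)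
            then have "b n < \<Lambda> \<omega> n" unfolding \<Lambda>_def using assms(4)[of n]
              by (subst Min_gr_iff) auto
            moreover have "0 \<le> b n" using Qpos[of "2*n"] elim by (simp add: b_def)
            ultimately show ?case by simp
          qed
          then have "summable b" using sl by (rule summable_comparison_test_ev)
          then have s2: "summable (\<lambda>k. nd.Q (u (2 * k)))"
            using summable_mult[of b 2] by (simp add: b_def)
          have sg: "summable (\<lambda>n. nd.Q (u (2 * (n div 2))))"
            using summable_div2[OF s2] by simp
          have ev2: "\<forall>\<^sub>F n in sequentially. norm (nd.Q (u n)) \<le> nd.Q (u (2 * (n div 2)))"
            using eventually_gt_at_top[of "2 * N + 2"]
          proof eventually_elim
            case (elim n)
            have "0 \<le> nd.Q (u n)" using u0 u1[of n] elim by (intro nd.Q_nonneg) auto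
            moreover have "nd.Q (u n) \<le> nd.Q (u (2 * (n div 2)))"
              using u0 u1[of "2 * (n div 2)"] elim umono[of "2 * (n div 2)" n]
              by (intro nd.Q_mono) auto
            ultimately show ?case by simp
          qed
          have "summable (\<lambda>n. nd.Q (u n))"
            by (rule summable_comparison_test_ev[OF ev2 sg])
          with ns show False by simp
        qed
      qed
      then have "measure P A = 0" using Ameas by (simp add: P.prob_eq_0)
      with pos show False by simp
    qed
  next
    assume sq: "summable (\<lambda>n. nd.Q (u n))"
    define a where "a n = nd.Q (u (n div 2))" for n
    have sa: "summable a" unfolding a_def by (rule summable_div2[OF sq])
    define B where "B n = {\<omega>. \<forall>i\<in>{n} \<times> {..<\<sigma> n}. \<omega> i \<in> {a n<..}}" for n
    have Bm: "B n \<in> sets P" for n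
      unfolding B_def P_def by (rule \<mu>.PiM_rect) auto
    have Bmeas: "measure P (B n) = (1 - cdf \<mu> (a n)) ^ \<sigma> n" for n
    proof -
      have "measure P (B n) = (\<Prod>i\<in>{n} \<times> {..<\<sigma> n}. measure \<mu> {a n<..})"
        unfolding B_def P_def by (rule \<mu>.PiM_rect) auto
      also have "\<dots> = measure \<mu> {a n<..} ^ \<sigma> n" by (simp add: card_cartesian_product)
      also have "measure \<mu> {a n<..} = 1 - cdf \<mu> (a n)"
      proof -
        have "{a n<..} = space \<mu> - {..a n}" by auto
        then show ?thesis using \<mu>.prob_compl[of "{..a n}"] \<mu>.prob_compl[of "{..b n}"] by (simp add: cdf_def)
      qed
      finally show ?thesis .
    qed
    define d where "d = 1 / sqrt c"
    have d: "0 < d" "d < 1" using c by (auto simp: d_def)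
    have Bbound: "measure P (B n) \<le> d ^ n" if "2 * N + 2 < n" for n
    proof -
      define s where "s = real (\<sigma> (n div 2))"
      define k where "k = n - n div 2"
      have nd2: "N < n div 2" using that by auto
      have "0 \<le> 1 - cdf \<mu> (a n)" using \<mu>.cdf_bounded_prob by simp
      moreover have "1 - cdf \<mu> (a n) \<le> 1 - 1 / s"
        using nd.Q_ge[of "u (n div 2)"] u0 u1[OF nd2] by (simp add: a_def u_def s_def)
      ultimately have "measure P (B n) \<le> (1 - 1 / s) ^ \<sigma> n"
        unfolding Bmeas using power_mono by blast
      also have "\<dots> \<le> s / \<sigma> n"
        using sig2[OF nd2] assms(4)[of n] by (intro pow_bound) (auto simp: s_def)
      also have "\<dots> \<le> 1 / c ^ k"
      proof -
        have "c ^ k * s \<le> \<sigma> n" using grow[of "n div 2" k] nd2 by (simp add: s_def k_def)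
        moreover have "0 < real (\<sigma> n)" "0 < c ^ k" using assms(4)[of n] c by auto
        ultimately show ?thesis by (simp add: field_simps)
      qed
      also have "\<dots> = d ^ (2 * k)"
        using c by (simp add: d_def power_mult power_divide real_sqrt_pow2)
      also have "\<dots> \<le> d ^ n" using d by (intro power_decreasing) (auto simp: k_def)
      finally show ?thesis .
    qed
    have "summable (\<lambda>n. measure P (B n))"
    proof (rule summable_comparison_test_ev)
      show "\<forall>\<^sub>F n in sequentially. norm (measure P (B n)) \<le> d ^ n"
        using eventually_gt_at_top[of "2 * N + 2"] by (rule eventually_mono) (use Bbound in simp)
      show "summable (\<lambda>n. d ^ n)" using d by (intro summable_geometric) auto
    qed
    then have BC: "AE \<omega> in P. eventually (\<lambda>n. \<omega> \<in> space P - B n) sequentially"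
      using Bm by (intro borel_cantelli_AE1) (auto simp: P.emeasure_eq_measure)
    have nn: "AE \<omega> in P. \<forall>i. 0 \<le> \<omega> i"
    proof (subst AE_all_countable, intro allI)
      fix i :: "nat \<times> nat"
      have sm: "{\<omega>. \<forall>i'\<in>{i}. \<omega> i' \<in> {..<0}} \<in> sets P"
        unfolding P_def by (rule \<mu>.PiM_rect) auto
      have "measure P {\<omega>. \<forall>i'\<in>{i}. \<omega> i' \<in> {..<0}} = measure \<mu> {..<0}"
        unfolding P_def by (subst \<mu>.PiM_rect) auto
      also have "\<dots> = 0" by (rule nd.neg0)
      finally have "AE \<omega> in P. \<omega> \<notin> {\<omega>. \<forall>i'\<in>{i}. \<omega> i' \<in> {..<0}}"
        using sm by (simp add: P.prob_eq_0)
      then show "AE \<omega> in P. 0 \<le> \<omega> i" by (rule eventually_mono) auto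
    qed
    have "AE \<omega> in P. \<omega> \<in> A"
      using BC nn
    proof (eventually_elim)
      case (elim \<omega>)
      have "\<forall>\<^sub>F n in sequentially. norm (\<Lambda> \<omega> n) \<le> a n"
        using elim(1)
      proof (rule eventually_mono)
        fix n assume "\<omega> \<in> space P - B n"
        then obtain j where j: "j < \<sigma> n" "\<omega> (n, j) \<le> a n" by (auto simp: B_def spP not_less)
        have "\<Lambda> \<omega> n \<le> \<omega> (n, j)" unfolding \<Lambda>_def using j by (intro Min_le) auto
        moreover have "0 \<le> \<Lambda> \<omega> n" unfolding \<Lambda>_def using elim(2) assms(4)[of n]
          by (subst Min_ge_iff) auto
        ultimately show "norm (\<Lambda> \<omega> n) \<le> a n" using j by simp
      qed
      then have "summable (\<Lambda> \<omega>)" using sa by (rule summable_comparison_test_ev)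
      then show ?case by (simp add: A_def spP)
    qed
    then have "measure P A = 1" using Ameas unfolding A_def by (simp add: P.prob_Collect_eq_1)
    then show "measure P A > 0" by simp
  qed
  show ?thesis unfolding ss qeq goal[unfolded u_def] ..
qed

end
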